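(* Let $\lambda>0$, $\nu>0$ and $\mu\in\mathbb{R}$ be constants, and let $F$ be one of the functions $$F_1(t)=\frac{\arctan(\lambda t+\mu)-\arctan(\frac{\lambda t}{2}+\mu)}{\arctan(\frac{\lambda t}{2}+\mu)-\arctan(\frac{\lambda t}{4}+\mu)},\qquad F_2(t)=\frac{\frac{1}{t/2+\nu}-\frac{1}{t+\nu}}{\frac{1}{t/4+\nu}-\frac{1}{t/2+\nu}}.$$ Let $t>0$. If $F(t)\ge\frac32$, then $F(t/2)>\frac32$. *)

theory Defs
  imports Complex_Main
begin

definition F1 :: "real \<Rightarrow> real \<Rightarrow> real \<Rightarrow> real" where
  "F1 lam mu t = (arctan (lam * t + mu) - arctan (lam * t / 2 + mu)) /
                 (arctan (lam * t / 2 + mu) - arctan (lam * t / 4 + mu))"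

definition F2 :: "real \<Rightarrow> real \<Rightarrow> real" where
  "F2 nu t = (1 / (t / 2 + nu) - 1 / (t + nu)) /
             (1 / (t / 4 + nu) - 1 / (t / 2 + nu))"

end

theory Submission
  imports Defs
begin

definition KK :: "real \<Rightarrow> real \<Rightarrow> real" where
  "KK mu s = arctan (mu + 2*s) - 3/2 * arctan (mu + s)"

definition PP :: "real \<Rightarrow> real \<Rightarrow> real" where
  "PP mu s = 1 + mu^2 - 4*mu*s - 8*s^2"

lemma KK_deriv: "DERIV (KK mu) x :> PP mu x / (2*(1+(mu+2*x)^2)*(1+(mu+x)^2))"
proof -
  have "DERIV (KK mu) x :> 2 * inverse (1+(mu+2*x)^2) - 3/2 * inverse (1+(mu+x)^2)"
    unfolding KK_def
    by (rule derivative_eq_intros refl | simp)+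
  moreover have "2 * inverse (1+(mu+2*x)^2) - 3/2 * inverse (1+(mu+x)^2)
      = PP mu x / (2*(1+(mu+2*x)^2)*(1+(mu+x)^2))"
  proof -
    define A where "A = 1+(mu+2*x)^2"
    define B where "B = 1+(mu+x)^2"
    have A: "A > 0" and B: "B > 0" unfolding A_def B_def by (simp_all add: add_pos_nonneg)
    have "2 * inverse A - 3/2 * inverse B = (4*B - 3*A) / (2*A*B)"
      using A B by (simp add: field_simps)
    moreover have "PP mu x = 4*B - 3*A" unfolding PP_def A_def B_def
      by (simp add: power2_eq_square algebra_simps)
    ultimately show ?thesis unfolding A_def B_def by simp
  qed
  ultimately show ?thesis by simp
qed

lemma PP_id: "PP mu a * s - PP mu s * a = (1+mu^2)*(s-a) + 8*a*s*(s-a)"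
  unfolding PP_def by (simp add: algebra_simps power2_eq_square)

lemma pos_prod: "(0::real) < 2*(1+(mu+2*x)^2)*(1+(mu+x)^2)"
  by (simp add: add_pos_nonneg)

lemma key:
  fixes a mu :: real
  assumes a: "a > 0" and h: "KK mu (2*a) \<ge> KK mu a"
  shows "KK mu a > KK mu (a/2)"
proof -
  have Pa: "PP mu a > 0"
  proof (rule ccontr)
    assume "\<not> PP mu a > 0"
    hence n: "PP mu a \<le> 0" by simp
    have cont: "continuous_on {a..2*a} (KK mu)" unfolding KK_def
      by (intro continuous_intros)
    have der: "\<exists>y. DERIV (KK mu) x :> y \<and> y < 0" if x: "a < x" "x < 2*a" for x
    proof -
      have "PP mu x < 0"
      proof -
        have xa: "x > a" using x by simp
        have m: "0 < 1 + mu^2" by (simp add: add_pos_nonneg)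
        have "(1+mu^2)*(x-a) > 0" using xa m by simp
        moreover have "8*a*x*(x-a) \<ge> 0" using xa a by simp
        ultimately have "(1+mu^2)*(x-a) + 8*a*x*(x-a) > 0" by linarith
        hence "PP mu x * a < PP mu a * x" using PP_id[of mu a x] by linarith
        moreover have "PP mu a * x \<le> 0" using n xa a by (simp add: mult_nonpos_nonneg)
        ultimately have "PP mu x * a < 0" by linarith
        thus ?thesis using a by (auto simp: mult_less_0_iff)
      qed
      thus ?thesis
        using KK_deriv pos_prod by (blast intro: divide_neg_pos)
    qed
    have "KK mu (2*a) < KK mu a"
      using DERIV_neg_imp_decreasing_open[of a "2*a" "KK mu"] a der cont by auto
    thus False using h by simp
  qed
  have der: "\<exists>y. DERIV (KK mu) x :> y \<and> y > 0" if x: "a/2 \<le> x" "x \<le> a" for x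
  proof -
    have "8*a*x*(x-a) \<le> 0" using x a by (simp add: mult_nonneg_nonpos)
    moreover have "(1+mu^2)*(x-a) \<le> 0" using x by (simp add: mult_nonneg_nonpos add_pos_nonneg)
    ultimately have "(1+mu^2)*(x-a) + 8*a*x*(x-a) \<le> 0" by linarith
    hence "PP mu a * x \<le> PP mu x * a" using PP_id[of mu a x] by linarith
    moreover have "PP mu a * x > 0" using Pa x a by simp
    ultimately have "PP mu x * a > 0" by linarith
    hence "PP mu x > 0" using a by (auto simp: zero_less_mult_iff)
    thus ?thesis
      using KK_deriv pos_prod by (blast intro: divide_pos_pos)
  qed
  show ?thesis
    using DERIV_pos_imp_increasing[of "a/2" a "KK mu"] a der by auto
qed

lemma F2_eq:
  assumes "t > 0" "nu > 0"
  shows "F2 nu t = (t/2 + 2*nu) / (t + nu)"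
proof -
  have n: "t/2+nu > 0" "t+nu > 0" "t/4+nu > 0" using assms by auto
  have x: "1 / (t / 2 + nu) - 1 / (t + nu) = (t/2) / ((t/2+nu)*(t+nu))"
    using n by (simp add: field_simps)
  have y: "1 / (t / 4 + nu) - 1 / (t / 2 + nu) = (t/4) / ((t/4+nu)*(t/2+nu))"
    using n by (simp add: field_simps)
  have "(t/2) / ((t/2+nu)*(t+nu)) / ((t/4) / ((t/4+nu)*(t/2+nu))) = 2*(t/4+nu)/(t+nu)"
  proof -
    have "(t + nu * 4) / (t * 2 + nu * 2) = (2*(t / 2 + nu * 2)) / (2*(t + nu))"
      by (simp add: algebra_simps)
    also have "\<dots> = (t / 2 + nu * 2) / (t + nu)" by (rule mult_divide_mult_cancel_left) simp
    finally have e: "(t + nu * 4) / (t * 2 + nu * 2) = (t / 2 + nu * 2) / (t + nu)" .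
    show ?thesis using n assms e by (simp add: divide_divide_eq_left divide_divide_eq_right mult.commute)
  qed
  also have "\<dots> = (t/2 + 2*nu) / (t + nu)" by (simp add: algebra_simps)
  finally show ?thesis unfolding F2_def x y .
qed

lemma F1_part:
  fixes lam mu t :: real
  assumes l: "lam > 0" and t: "t > 0" and h: "F1 lam mu t \<ge> 3/2"
  shows "F1 lam mu (t/2) > 3/2"
proof -
  define a where "a = lam*t/4"
  have a: "a > 0" using l t by (simp add: a_def)
  have e1: "F1 lam mu t = (arctan (mu+4*a) - arctan (mu+2*a)) / (arctan (mu+2*a) - arctan (mu+a))"
    unfolding F1_def a_def by (simp add: algebra_simps)
  have e2: "F1 lam mu (t/2) = (arctan (mu+2*a) - arctan (mu+a)) / (arctan (mu+a) - arctan (mu+a/2))"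
    unfolding F1_def a_def by (simp add: algebra_simps)
  have d1: "arctan (mu+2*a) - arctan (mu+a) > 0" using a by (simp add: arctan_less_iff)
  have d2: "arctan (mu+a) - arctan (mu+a/2) > 0" using a by (simp add: arctan_less_iff)
  have "KK mu (2*a) \<ge> KK mu a"
    using h d1 unfolding e1 KK_def by (simp add: pos_le_divide_eq algebra_simps)
  hence "KK mu a > KK mu (a/2)" using key a by blast
  thus ?thesis using d2 unfolding e2 KK_def by (simp add: pos_less_divide_eq algebra_simps)
qed

theorem corollary3p2:
  fixes lam nu mu t :: real
  assumes "lam > 0" and "nu > 0" and "t > 0"
  shows "(F1 lam mu t \<ge> 3/2 \<longrightarrow> F1 lam mu (t/2) > 3/2) \<and>
         (F2 nu t \<ge> 3/2 \<longrightarrow> F2 nu (t/2) > 3/2)"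
proof (intro conjI impI)
  assume "F1 lam mu t \<ge> 3/2"
  thus "F1 lam mu (t/2) > 3/2" using F1_part assms by blast
next
  assume h: "F2 nu t \<ge> 3/2"
  have p: "t + nu > 0" "t/2 + nu > 0" using assms by auto
  have "nu \<ge> 2*t" using h p(1) unfolding F2_eq[OF assms(3,2)] by (simp add: le_divide_eq)
  moreover have "t/2 > 0" using assms by simp
  ultimately show "F2 nu (t/2) > 3/2" using p(2) assms unfolding F2_eq[OF \<open>t/2 > 0\<close> assms(2)] by (simp add: less_divide_eq)
qed

end
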